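(* Let $d\in\mathbb N$ and let $\mathcal K$ be a Fraïssé class. Assume that the class of structures in $\mathcal K$ whose Ramsey degree for embeddings in $\mathcal K$ is at most $d$ is cofinal in $\mathcal K$. Then $|M(G_\mathcal K)|\le d$.
   Context: For structures $A,B$, $B^A$ is the set of embeddings of $A$ into $B$; $A\le B$ means $B^A\ne\emptyset$. A class $\mathcal D$ is cofinal in $\mathcal K$ if for every $A\in\mathcal K$ there is $B\in\mathcal D$ with $A\le B$. A Fraïssé class is a class of finite structures that is hereditary, has joint embedding and amalgamation, and contains arbitrarily large finite structures; $\mathrm{Flim}(\mathcal K)$ is its Fraïssé limit, $G_\mathcal K=\mathrm{Aut}(\mathrm{Flim}(\mathcal K))$ with pointwise convergence topology, and $M(G)$ is the universal minimal $G$-flow (flows are continuous actions on compact Hausdorff spaces). $C\hookrightarrow(B)^A_{k,d}$ means: for every $\chi:C^A\to\{0,\dots,k-1\}$ there is $b\in C^B$ with $|\chi(\{b\circ a:a\in B^A\})|\le d$; the Ramsey degree for embeddings of $A$ in $\mathcal K$ is the least $d$ such that for all $B\in\mathcal K$, $k\ge2$ there is $C\in\mathcal K$ with $C\hookrightarrow(B)^A_{k,d}$ ($\infty$ if none). *)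

theory Defs
  imports "HOL-Analysis.Analysis" "HOL-Library.Extended_Nat"
begin

text \<open>A signature: arities of relation symbols (type 'r) and function symbols (type 'f).
Structures carry a universe, an interpretation of relation symbols and of function symbols.\<close>

type_synonym ('r,'f) signature = "('r \<Rightarrow> nat) \<times> ('f \<Rightarrow> nat)"

record ('a,'r,'f) struct =
  univ :: "'a set"
  rel  :: "'r \<Rightarrow> 'a list \<Rightarrow> bool"
  fns  :: "'f \<Rightarrow> 'a list \<Rightarrow> 'a"

definition closed_in_struct ::
  "('r,'f) signature \<Rightarrow> ('a,'r,'f) struct \<Rightarrow> 'a set \<Rightarrow> bool" where
  "closed_in_struct sig A T \<longleftrightarrow> T \<subseteq> univ A \<and>
     (\<forall>F xs. set xs \<subseteq> T \<and> length xs = snd sig F \<longrightarrow> fns A F xs \<in> T)"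

definition wf_struct :: "('r,'f) signature \<Rightarrow> ('a,'r,'f) struct \<Rightarrow> bool" where
  "wf_struct sig A \<longleftrightarrow> closed_in_struct sig A (univ A)"

definition emb ::
  "('r,'f) signature \<Rightarrow> ('a,'r,'f) struct \<Rightarrow> ('b,'r,'f) struct \<Rightarrow> ('a \<Rightarrow> 'b) set" where
  "emb sig A B = {h \<in> univ A \<rightarrow>\<^sub>E univ B.
      inj_on h (univ A) \<and>
      (\<forall>R xs. set xs \<subseteq> univ A \<and> length xs = fst sig R \<longrightarrow>
                (rel B R (map h xs) \<longleftrightarrow> rel A R xs)) \<and>
      (\<forall>F xs. set xs \<subseteq> univ A \<and> length xs = snd sig F \<longrightarrow>
                h (fns A F xs) = fns B F (map h xs))}"

definition embeds :: "('r,'f) signature \<Rightarrow> ('a,'r,'f) struct \<Rightarrow> ('b,'r,'f) struct \<Rightarrow> bool" where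
  "embeds sig A B \<longleftrightarrow> emb sig A B \<noteq> {}"

text \<open>Classes of structures are represented by structures on universes contained in nat
(every finite or countable structure is isomorphic to one of these); hereditarity
includes closure under isomorphic copies.\<close>

definition fraisse_class ::
  "('r,'f) signature \<Rightarrow> (nat,'r,'f) struct set \<Rightarrow> bool" where
  "fraisse_class sig K \<longleftrightarrow>
     (\<forall>A\<in>K. wf_struct sig A \<and> finite (univ A)) \<and>
     (\<forall>A\<in>K. \<forall>B. wf_struct sig B \<and> finite (univ B) \<and> embeds sig B A \<longrightarrow> B \<in> K) \<and>
     (\<forall>A\<in>K. \<forall>B\<in>K. \<exists>C\<in>K. embeds sig A C \<and> embeds sig B C) \<and>
     (\<forall>A\<in>K. \<forall>B\<in>K. \<forall>C\<in>K. \<forall>f\<in>emb sig A B. \<forall>g\<in>emb sig A C.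
        \<exists>D\<in>K. \<exists>r\<in>emb sig B D. \<exists>s\<in>emb sig C D. \<forall>x\<in>univ A. r (f x) = s (g x)) \<and>
     (\<forall>n. \<exists>A\<in>K. n \<le> card (univ A))"

definition substruct :: "('a,'r,'f) struct \<Rightarrow> 'a set \<Rightarrow> ('a,'r,'f) struct" where
  "substruct A T = A\<lparr>univ := T\<rparr>"

definition Aut :: "('r,'f) signature \<Rightarrow> ('a,'r,'f) struct \<Rightarrow> ('a \<Rightarrow> 'a) set" where
  "Aut sig L = {g \<in> emb sig L L. g ` univ L = univ L}"

text \<open>L is a Fraisse limit of K: a countable (universe within nat) structure, locally finite,
whose age (finite structures embeddable in L) is K, and which is ultrahomogeneous.\<close>
definition is_fraisse_limit ::
  "('r,'f) signature \<Rightarrow> (nat,'r,'f) struct set \<Rightarrow> (nat,'r,'f) struct \<Rightarrow> bool" where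
  "is_fraisse_limit sig K L \<longleftrightarrow>
     wf_struct sig L \<and>
     (\<forall>S. S \<subseteq> univ L \<and> finite S \<longrightarrow>
        (\<exists>T. S \<subseteq> T \<and> finite T \<and> closed_in_struct sig L T)) \<and>
     (\<forall>A. wf_struct sig A \<and> finite (univ A) \<longrightarrow> (A \<in> K \<longleftrightarrow> embeds sig A L)) \<and>
     (\<forall>T1 T2 h. finite T1 \<and> closed_in_struct sig L T1 \<and> finite T2 \<and> closed_in_struct sig L T2
        \<and> h \<in> emb sig (substruct L T1) (substruct L T2) \<and> h ` T1 = T2 \<longrightarrow>
        (\<exists>g\<in>Aut sig L. \<forall>x\<in>T1. g x = h x))"

definition arrows ::
  "('r,'f) signature \<Rightarrow> (nat,'r,'f) struct \<Rightarrow> (nat,'r,'f) struct \<Rightarrow> (nat,'r,'f) struct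
     \<Rightarrow> nat \<Rightarrow> nat \<Rightarrow> bool" where
  "arrows sig C B A k d \<longleftrightarrow>
     (\<forall>col \<in> (emb sig A C \<rightarrow> {..<k}). \<exists>b\<in>emb sig B C.
        card (col ` {compose (univ A) b a | a. a \<in> emb sig A B}) \<le> d)"

definition ramsey_prop ::
  "('r,'f) signature \<Rightarrow> (nat,'r,'f) struct set \<Rightarrow> (nat,'r,'f) struct \<Rightarrow> nat \<Rightarrow> bool" where
  "ramsey_prop sig K A d \<longleftrightarrow>
     (\<forall>B\<in>K. \<forall>k\<ge>2. \<exists>C\<in>K. arrows sig C B A k d)"

definition ramsey_degree ::
  "('r,'f) signature \<Rightarrow> (nat,'r,'f) struct set \<Rightarrow> (nat,'r,'f) struct \<Rightarrow> enat" where
  "ramsey_degree sig K A =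
     (if \<exists>d. ramsey_prop sig K A d then enat (LEAST d. ramsey_prop sig K A d) else \<infinity>)"

definition pointwise_top :: "(nat \<Rightarrow> nat) set \<Rightarrow> (nat \<Rightarrow> nat) topology" where
  "pointwise_top G = subtopology (product_topology (\<lambda>_. discrete_topology UNIV) UNIV) G"

text \<open>G is a group of permutations of the set U (group operation: composition restricted to U,
identity: restrict id U). A G-flow is a continuous action on a compact Hausdorff space.\<close>
definition is_flow ::
  "nat set \<Rightarrow> (nat \<Rightarrow> nat) set \<Rightarrow> 'x topology \<Rightarrow> ((nat \<Rightarrow> nat) \<Rightarrow> 'x \<Rightarrow> 'x) \<Rightarrow> bool" where
  "is_flow U G X act \<longleftrightarrow>
     compact_space X \<and> Hausdorff_space X \<and>
     (\<forall>g\<in>G. \<forall>x\<in>topspace X. act g x \<in> topspace X) \<and>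
     (\<forall>x\<in>topspace X. act (restrict id U) x = x) \<and>
     (\<forall>g\<in>G. \<forall>h\<in>G. \<forall>x\<in>topspace X. act (compose U g h) x = act g (act h x)) \<and>
     continuous_map (prod_topology (pointwise_top G) X) X (\<lambda>(g,x). act g x)"

definition minimal_flow ::
  "nat set \<Rightarrow> (nat \<Rightarrow> nat) set \<Rightarrow> 'x topology \<Rightarrow> ((nat \<Rightarrow> nat) \<Rightarrow> 'x \<Rightarrow> 'x) \<Rightarrow> bool" where
  "minimal_flow U G X act \<longleftrightarrow> is_flow U G X act \<and> topspace X \<noteq> {} \<and>
     (\<forall>Y. closedin X Y \<and> Y \<noteq> {} \<and> (\<forall>g\<in>G. \<forall>y\<in>Y. act g y \<in> Y) \<longrightarrow> Y = topspace X)"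

definition flow_hom ::
  "(nat \<Rightarrow> nat) set \<Rightarrow> 'x topology \<Rightarrow> ((nat \<Rightarrow> nat) \<Rightarrow> 'x \<Rightarrow> 'x)
     \<Rightarrow> 'y topology \<Rightarrow> ((nat \<Rightarrow> nat) \<Rightarrow> 'y \<Rightarrow> 'y) \<Rightarrow> ('x \<Rightarrow> 'y) \<Rightarrow> bool" where
  "flow_hom G X act Y act' \<phi> \<longleftrightarrow> continuous_map X Y \<phi> \<and>
     (\<forall>g\<in>G. \<forall>x\<in>topspace X. \<phi> (act g x) = act' g (\<phi> x))"

text \<open>Universal minimal flow: a minimal flow mapping onto every minimal flow
(universality is quantified over flows whose underlying type is the same as that of X).\<close>
definition universal_minimal_flow ::
  "nat set \<Rightarrow> (nat \<Rightarrow> nat) set \<Rightarrow> 'x topology \<Rightarrow> ((nat \<Rightarrow> nat) \<Rightarrow> 'x \<Rightarrow> 'x) \<Rightarrow> bool" where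
  "universal_minimal_flow U G X act \<longleftrightarrow> minimal_flow U G X act \<and>
     (\<forall>(Y :: 'x topology) act'. minimal_flow U G Y act' \<longrightarrow>
        (\<exists>\<phi>. flow_hom G X act Y act' \<phi> \<and> \<phi> ` topspace X = topspace Y))"

end

theory Submission
  imports Defs
begin

lemma emb_memD:
  assumes "h \<in> emb sig A B"
  shows "h \<in> univ A \<rightarrow>\<^sub>E univ B" "inj_on h (univ A)"
    "\<And>R xs. set xs \<subseteq> univ A \<Longrightarrow> length xs = fst sig R \<Longrightarrow> rel B R (map h xs) \<longleftrightarrow> rel A R xs"
    "\<And>F xs. set xs \<subseteq> univ A \<Longrightarrow> length xs = snd sig F \<Longrightarrow> h (fns A F xs) = fns B F (map h xs)"
  using assms unfolding emb_def by auto

lemma wf_fns: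
  assumes "wf_struct sig A" "set xs \<subseteq> univ A" "length xs = snd sig F"
  shows "fns A F xs \<in> univ A"
  using assms unfolding wf_struct_def closed_in_struct_def by auto

lemma map_restrict[simp]: "set xs \<subseteq> S \<Longrightarrow> map (restrict f S) xs = map f xs"
  by (induct xs) auto

lemma emb_comp:
  assumes f: "f \<in> emb sig A B" and g: "g \<in> emb sig B C" and wf: "wf_struct sig A"
  shows "restrict (g \<circ> f) (univ A) \<in> emb sig A C"
proof -
  note fD = emb_memD[OF f] and gD = emb_memD[OF g]
  have fB: "\<And>x. x \<in> univ A \<Longrightarrow> f x \<in> univ B" using fD(1) by auto
  have gC: "\<And>x. x \<in> univ B \<Longrightarrow> g x \<in> univ C" using gD(1) by auto
  have mp: "\<And>xs. set xs \<subseteq> univ A \<Longrightarrow> map (restrict (g \<circ> f) (univ A)) xs = map g (map f xs)"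
    by (simp add: map_restrict)
  have sB: "\<And>xs. set xs \<subseteq> univ A \<Longrightarrow> set (map f xs) \<subseteq> univ B" using fB by auto
  show ?thesis unfolding emb_def
  proof (intro CollectI conjI allI impI)
    show "restrict (g \<circ> f) (univ A) \<in> univ A \<rightarrow>\<^sub>E univ C" using fB gC by auto
    show "inj_on (restrict (g \<circ> f) (univ A)) (univ A)"
      using fD(2) gD(2) fB unfolding inj_on_def by auto
  next
    fix R xs assume a: "set xs \<subseteq> univ A \<and> length xs = fst sig R"
    have "rel C R (map g (map f xs)) = rel A R xs"
      using a gD(3)[OF sB, of xs R] fD(3)[of xs R] by auto
    then show "rel C R (map (restrict (g \<circ> f) (univ A)) xs) = rel A R xs"
      using a mp[of xs] by simp
  next
    fix F xs assume a: "set xs \<subseteq> univ A \<and> length xs = snd sig F"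
    have "fns A F xs \<in> univ A" using wf_fns[OF wf] a by auto
    then show "restrict (g \<circ> f) (univ A) (fns A F xs) = fns C F (map (restrict (g \<circ> f) (univ A)) xs)"
      using a mp[of xs] gD(4)[OF sB, of xs F] fD(4)[of xs F] by auto
  qed
qed

lemma emb_substruct_iff:
  assumes "T \<subseteq> univ L" shows "h \<in> emb sig A (substruct L T) \<longleftrightarrow> h \<in> emb sig A L \<and> h ` univ A \<subseteq> T"
  using assms unfolding emb_def substruct_def by (auto simp: PiE_iff)

lemma emb_from_substruct:
  "emb sig (substruct L T) B = {h \<in> T \<rightarrow>\<^sub>E univ B.
      inj_on h T \<and>
      (\<forall>R xs. set xs \<subseteq> T \<and> length xs = fst sig R \<longrightarrow> (rel B R (map h xs) \<longleftrightarrow> rel L R xs)) \<and>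
      (\<forall>F xs. set xs \<subseteq> T \<and> length xs = snd sig F \<longrightarrow> h (fns L F xs) = fns B F (map h xs))}"
  unfolding emb_def substruct_def by simp

lemma substruct_wf:
  assumes "closed_in_struct sig L T" shows "wf_struct sig (substruct L T)"
  using assms unfolding wf_struct_def closed_in_struct_def substruct_def by auto

lemma id_emb_substruct:
  assumes "closed_in_struct sig L T" shows "restrict id T \<in> emb sig (substruct L T) L"
  using assms unfolding emb_from_substruct closed_in_struct_def by (auto simp: inj_on_def)

lemma list_in_image: "set xs \<subseteq> h ` S \<Longrightarrow> \<exists>ys. xs = map h ys \<and> set ys \<subseteq> S"
proof (induct xs)
  case (Cons x xs)
  then obtain ys where "xs = map h ys" "set ys \<subseteq> S" by auto
  moreover obtain y where "y \<in> S" "x = h y" using Cons.prems by auto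
  ultimately show ?case by (intro exI[of _ "y # ys"]) auto
qed simp

lemma emb_image_closed:
  assumes h: "h \<in> emb sig A L" and wf: "wf_struct sig A"
  shows "closed_in_struct sig L (h ` univ A)"
  unfolding closed_in_struct_def
proof (intro conjI allI impI)
  show "h ` univ A \<subseteq> univ L" using emb_memD(1)[OF h] by auto
next
  fix F xs assume a: "set xs \<subseteq> h ` univ A \<and> length xs = snd sig F"
  then obtain ys where ys: "xs = map h ys" "set ys \<subseteq> univ A"
    using list_in_image by blast
  have "length ys = snd sig F" using a ys by simp
  then show "fns L F xs \<in> h ` univ A"
    using emb_memD(4)[OF h ys(2)] wf_fns[OF wf ys(2)] ys(1) by (metis imageI)
qed

lemma emb_inv:
  assumes b: "b \<in> emb sig A B" and wf: "wf_struct sig A"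
  shows "restrict (inv_into (univ A) b) (b ` univ A) \<in> emb sig (substruct B (b ` univ A)) A"
proof -
  note bD = emb_memD[OF b]
  let ?i = "restrict (inv_into (univ A) b) (b ` univ A)"
  have mp: "\<And>xs. set xs \<subseteq> b ` univ A \<Longrightarrow> map b (map ?i xs) = xs \<and> set (map ?i xs) \<subseteq> univ A"
  proof -
    fix xs assume "set xs \<subseteq> b ` univ A"
    then show "map b (map ?i xs) = xs \<and> set (map ?i xs) \<subseteq> univ A"
      by (induct xs) (auto simp: f_inv_into_f inv_into_into)
  qed
  show ?thesis unfolding emb_from_substruct
  proof (intro CollectI conjI allI impI)
    show "?i \<in> b ` univ A \<rightarrow>\<^sub>E univ A" by (auto simp: inv_into_into)
    show "inj_on ?i (b ` univ A)"
      unfolding inj_on_def by (auto simp: inv_into_f_f[OF bD(2)])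
  next
    fix R xs assume a: "set xs \<subseteq> b ` univ A \<and> length xs = fst sig R"
    then show "rel A R (map ?i xs) = rel B R xs"
      using mp[of xs] bD(3)[of "map ?i xs" R] by auto
  next
    fix F xs assume a: "set xs \<subseteq> b ` univ A \<and> length xs = snd sig F"
    let ?ys = "map ?i xs"
    have ys: "map b ?ys = xs" "set ?ys \<subseteq> univ A" using mp a by auto
    have fy: "fns A F ?ys \<in> univ A" using wf_fns[OF wf ys(2)] a by simp
    have e: "b (fns A F ?ys) = fns B F xs" using bD(4)[OF ys(2)] a ys(1) by simp
    have "?i (fns B F xs) = fns A F ?ys"
      using fy e[symmetric] by (auto simp: inv_into_f_f[OF bD(2)])
    then show "?i (fns B F xs) = fns A F ?ys" .
  qed
qed

lemma substruct_self[simp]: "substruct L (univ L) = L"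
  unfolding substruct_def by simp

lemma aut_memD: "g \<in> Aut sig L \<Longrightarrow> g \<in> emb sig L L \<and> g ` univ L = univ L"
  unfolding Aut_def by auto

lemma aut_id:
  assumes wf: "wf_struct sig L" shows "restrict id (univ L) \<in> Aut sig L"
  using id_emb_substruct[of sig L "univ L"] wf unfolding Aut_def wf_struct_def by auto

lemma aut_comp:
  assumes wf: "wf_struct sig L" and g: "g \<in> Aut sig L" and h: "h \<in> Aut sig L"
  shows "compose (univ L) g h \<in> Aut sig L"
proof -
  have "compose (univ L) g h = restrict (g \<circ> h) (univ L)" by (simp add: compose_def o_def)
  moreover have "restrict (g \<circ> h) (univ L) \<in> emb sig L L"
    using emb_comp[of h sig L L g L] aut_memD[OF g] aut_memD[OF h] wf by auto
  moreover have "restrict (g \<circ> h) (univ L) ` univ L = univ L"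
  proof -
    have "restrict (g \<circ> h) (univ L) ` univ L = g ` (h ` univ L)" by auto
    then show ?thesis using aut_memD[OF g] aut_memD[OF h] by simp
  qed
  ultimately show ?thesis unfolding Aut_def by auto
qed

lemma aut_inv:
  assumes wf: "wf_struct sig L" and g: "g \<in> Aut sig L"
  shows "restrict (inv_into (univ L) g) (univ L) \<in> Aut sig L"
    "compose (univ L) (restrict (inv_into (univ L) g) (univ L)) g = restrict id (univ L)"
    "compose (univ L) g (restrict (inv_into (univ L) g) (univ L)) = restrict id (univ L)"
proof -
  note gD = aut_memD[OF g]
  note iD = emb_memD[OF conjunct1[OF gD]]
  have "restrict (inv_into (univ L) g) (univ L) \<in> emb sig L L"
    using emb_inv[OF conjunct1[OF gD] wf] gD by simp
  moreover have "restrict (inv_into (univ L) g) (univ L) ` univ L = univ L"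
    using gD iD(2) by (metis bij_betw_def bij_betw_inv_into image_restrict_eq)
  ultimately show "restrict (inv_into (univ L) g) (univ L) \<in> Aut sig L" unfolding Aut_def by auto
  show "compose (univ L) (restrict (inv_into (univ L) g) (univ L)) g = restrict id (univ L)"
    using gD iD by (auto simp: compose_def fun_eq_iff inv_into_f_f)
  show "compose (univ L) g (restrict (inv_into (univ L) g) (univ L)) = restrict id (univ L)"
    using gD iD by (auto simp: compose_def fun_eq_iff inv_into_into f_inv_into_f)
qed

lemma aut_maps: "g \<in> Aut sig L \<Longrightarrow> x \<in> univ L \<Longrightarrow> g x \<in> univ L"
  using aut_memD by blast

lemma aut_ext: "g \<in> Aut sig L \<Longrightarrow> x \<notin> univ L \<Longrightarrow> g x = undefined"
  using aut_memD[of g sig L] unfolding emb_def by (auto simp: PiE_iff extensional_def)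

lemma homog:
  assumes FL: "is_fraisse_limit sig K L" and wf: "wf_struct sig A" and fin: "finite (univ A)"
    and a: "a \<in> emb sig A L" and b: "b \<in> emb sig A L"
  shows "\<exists>h\<in>Aut sig L. \<forall>t\<in>univ A. h (b t) = a t"
proof -
  let ?T1 = "b ` univ A" and ?T2 = "a ` univ A"
  let ?ib = "restrict (inv_into (univ A) b) ?T1"
  have c1: "closed_in_struct sig L ?T1" "closed_in_struct sig L ?T2"
    using emb_image_closed[OF b wf] emb_image_closed[OF a wf] by auto
  have ib: "?ib \<in> emb sig (substruct L ?T1) A" using emb_inv[OF b wf] .
  have e: "restrict (a \<circ> ?ib) ?T1 \<in> emb sig (substruct L ?T1) L"
    using emb_comp[OF ib a substruct_wf[OF c1(1)]] by (simp add: substruct_def)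
  have im: "restrict (a \<circ> ?ib) ?T1 ` ?T1 = ?T2"
  proof -
    have "\<And>t. t \<in> univ A \<Longrightarrow> restrict (a \<circ> ?ib) ?T1 (b t) = a t"
      using emb_memD(2)[OF b] by (simp add: inv_into_f_f)
    then have "restrict (a \<circ> ?ib) ?T1 ` ?T1 = (\<lambda>t. restrict (a \<circ> ?ib) ?T1 (b t)) ` univ A"
      by (simp add: image_image)
    also have "\<dots> = ?T2" using \<open>\<And>t. t \<in> univ A \<Longrightarrow> _\<close> by (intro image_cong) auto
    finally show ?thesis .
  qed
  have phi: "restrict (a \<circ> ?ib) ?T1 \<in> emb sig (substruct L ?T1) (substruct L ?T2)"
  proof -
    have "?T2 \<subseteq> univ L" using c1(2) unfolding closed_in_struct_def by simp
    moreover have "restrict (a \<circ> ?ib) ?T1 ` univ (substruct L ?T1) \<subseteq> ?T2"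
      using im by (simp add: substruct_def)
    ultimately show ?thesis using emb_substruct_iff e by blast
  qed
  have "finite ?T1" "finite ?T2" using fin by auto
  have hom: "\<forall>T1 T2 h. finite T1 \<and> closed_in_struct sig L T1 \<and> finite T2 \<and> closed_in_struct sig L T2
        \<and> h \<in> emb sig (substruct L T1) (substruct L T2) \<and> h ` T1 = T2 \<longrightarrow>
        (\<exists>g\<in>Aut sig L. \<forall>x\<in>T1. g x = h x)" using FL unfolding is_fraisse_limit_def by (elim conjE)
  obtain h where h: "h \<in> Aut sig L" "\<forall>x\<in>?T1. h x = restrict (a \<circ> ?ib) ?T1 x"
    using hom[rule_format, OF conjI[OF \<open>finite ?T1\<close> conjI[OF c1(1) conjI[OF \<open>finite ?T2\<close> conjI[OF c1(2) conjI[OF phi im]]]]]] by blast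
  show ?thesis
    using h emb_memD(2)[OF b] by (intro bexI[of _ h]) (auto simp: inv_into_f_f)
qed

lemma age:
  assumes FL: "is_fraisse_limit sig K L" and "wf_struct sig A" "finite (univ A)"
  shows "A \<in> K \<longleftrightarrow> embeds sig A L"
proof -
  have "\<forall>A. wf_struct sig A \<and> finite (univ A) \<longrightarrow> (A \<in> K \<longleftrightarrow> embeds sig A L)"
    using FL unfolding is_fraisse_limit_def by (elim conjE)
  then show ?thesis using assms(2,3) by simp
qed

lemma locfin:
  assumes FL: "is_fraisse_limit sig K L" and "S \<subseteq> univ L" "finite S"
  obtains T where "S \<subseteq> T" "finite T" "closed_in_struct sig L T"
proof -
  have "\<forall>S. S \<subseteq> univ L \<and> finite S \<longrightarrow>
        (\<exists>T. S \<subseteq> T \<and> finite T \<and> closed_in_struct sig L T)"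
    using FL unfolding is_fraisse_limit_def by (elim conjE)
  then show ?thesis using assms(2,3) that by blast
qed

lemma fl_wf: "is_fraisse_limit sig K L \<Longrightarrow> wf_struct sig L"
  unfolding is_fraisse_limit_def by (rule conjunct1)

lemma fc_wf: assumes "fraisse_class sig K" "A \<in> K" shows "wf_struct sig A \<and> finite (univ A)"
proof -
  have "\<forall>A\<in>K. wf_struct sig A \<and> finite (univ A)"
    using assms(1) unfolding fraisse_class_def by (rule conjunct1)
  then show ?thesis using assms(2) by blast
qed

lemma substruct_in_K:
  assumes FL: "is_fraisse_limit sig K L" and c: "closed_in_struct sig L T" and f: "finite T"
  shows "substruct L T \<in> K"
proof -
  have "wf_struct sig (substruct L T)" using substruct_wf[OF c] .
  moreover have "finite (univ (substruct L T))" using f by (simp add: substruct_def)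
  moreover have "embeds sig (substruct L T) L"
    using id_emb_substruct[OF c] unfolding embeds_def by blast
  ultimately show ?thesis using age[OF FL] by (simp only:)
qed

lemma rd_prop:
  assumes "ramsey_degree sig K B \<le> enat d" shows "ramsey_prop sig K B d"
proof -
  have ex: "\<exists>d. ramsey_prop sig K B d"
    using assms unfolding ramsey_degree_def by (auto split: if_splits)
  let ?m = "LEAST d. ramsey_prop sig K B d"
  have m: "ramsey_prop sig K B ?m" using ex by (metis LeastI)
  have "?m \<le> d" using assms ex unfolding ramsey_degree_def by simp
  then show ?thesis using m unfolding ramsey_prop_def arrows_def
    by (meson order_trans)
qed

lemma topspace_pt[simp]: "topspace (pointwise_top G) = G"
  unfolding pointwise_top_def by (simp add: PiE_UNIV_domain)

lemma flow_mem: "is_flow U G X act \<Longrightarrow> g \<in> G \<Longrightarrow> x \<in> topspace X \<Longrightarrow> act g x \<in> topspace X"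
  unfolding is_flow_def by blast
lemma flow_id: "is_flow U G X act \<Longrightarrow> x \<in> topspace X \<Longrightarrow> act (restrict id U) x = x"
  unfolding is_flow_def by blast
lemma flow_comp: "is_flow U G X act \<Longrightarrow> g \<in> G \<Longrightarrow> h \<in> G \<Longrightarrow> x \<in> topspace X \<Longrightarrow>
   act (compose U g h) x = act g (act h x)"
  unfolding is_flow_def by blast

lemma act_cont:
  assumes fl: "is_flow U G X act" and g: "g \<in> G"
  shows "continuous_map X X (act g)"
proof -
  have c: "continuous_map (prod_topology (pointwise_top G) X) X (\<lambda>(g,x). act g x)"
    using fl unfolding is_flow_def by blast
  have "continuous_map X (prod_topology (pointwise_top G) X) (\<lambda>x. (g, x))"
    using g by (intro continuous_map_pairedI) auto
  from continuous_map_compose[OF this c] show ?thesis by (simp add: o_def)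
qed

lemma hausdorff_sep:
  fixes n :: nat
  assumes H: "Hausdorff_space X" and inj: "inj_on x {..<n}" and sub: "x ` {..<n} \<subseteq> topspace X"
  shows "\<exists>V. \<forall>i<n. openin X (V i) \<and> x i \<in> V i \<and> (\<forall>j<n. j \<noteq> i \<longrightarrow> V i \<inter> V j = {})"
proof -
  have "\<forall>i j. \<exists>p. i < n \<and> j < n \<and> i \<noteq> j \<longrightarrow>
      openin X (fst p) \<and> openin X (snd p) \<and> x i \<in> fst p \<and> x j \<in> snd p \<and> disjnt (fst p) (snd p)"
  proof (intro allI)
    fix i j
    show "\<exists>p. i < n \<and> j < n \<and> i \<noteq> j \<longrightarrow>
      openin X (fst p) \<and> openin X (snd p) \<and> x i \<in> fst p \<and> x j \<in> snd p \<and> disjnt (fst p) (snd p)"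
    proof (cases "i < n \<and> j < n \<and> i \<noteq> j")
      case True
      then have "x i \<noteq> x j" "x i \<in> topspace X" "x j \<in> topspace X"
        using inj sub unfolding inj_on_def by auto
      then obtain A B where "openin X A" "openin X B" "x i \<in> A" "x j \<in> B" "disjnt A B"
        using H unfolding Hausdorff_space_def by blast
      then show ?thesis by (intro exI[of _ "(A,B)"]) auto
    qed auto
  qed
  then obtain p where p: "\<And>i j. i < n \<Longrightarrow> j < n \<Longrightarrow> i \<noteq> j \<Longrightarrow>
      openin X (fst (p i j)) \<and> openin X (snd (p i j)) \<and> x i \<in> fst (p i j) \<and> x j \<in> snd (p i j)
      \<and> disjnt (fst (p i j)) (snd (p i j))"
    by metis
  define N where "N i j = (if i < j then fst (p i j) else snd (p j i))" for i j
  define V where "V i = (\<Inter>j \<in> {..<n} - {i}. N i j) \<inter> topspace X" for i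
  have NO: "\<And>i j. i < n \<Longrightarrow> j < n \<Longrightarrow> i \<noteq> j \<Longrightarrow> openin X (N i j) \<and> x i \<in> N i j"
    unfolding N_def using p by (auto simp: not_less)
  have ND: "\<And>i j. i < n \<Longrightarrow> j < n \<Longrightarrow> i \<noteq> j \<Longrightarrow> N i j \<inter> N j i = {}"
  proof -
    fix i j assume ij: "i < n" "j < n" "i \<noteq> j"
    show "N i j \<inter> N j i = {}"
    proof (cases "i < j")
      case True
      moreover have "\<not> j < i" using True by simp
      ultimately have "N i j = fst (p i j)" "N j i = snd (p i j)" by (simp_all add: N_def)
      then show ?thesis using p[of i j] ij by (auto simp: disjnt_def)
    next
      case False then have "j < i" using ij by simp
      then have "N i j = snd (p j i)" "N j i = fst (p j i)" using False by (simp_all add: N_def)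
      then show ?thesis using p[of j i] ij by (auto simp: disjnt_def)
    qed
  qed
  show ?thesis
  proof (intro exI[of _ V] allI impI conjI)
    fix i assume i: "i < n"
    show "openin X (V i)" unfolding V_def using NO i by (intro openin_INT) auto
    show "x i \<in> V i" unfolding V_def using NO i sub by auto
    fix j assume "j < n" "j \<noteq> i"
    then show "V i \<inter> V j = {}" using ND[of i j] i unfolding V_def by auto
  qed
qed

lemma cont_nbhd:
  assumes fl: "is_flow (univ L) (Aut sig L) X act" and wf: "wf_struct sig L"
    and V: "openin X V" and xV: "x \<in> V"
  shows "\<exists>S U'. finite S \<and> openin X U' \<and> x \<in> U' \<and>
     (\<forall>g\<in>Aut sig L. (\<forall>s\<in>S. s \<in> univ L \<longrightarrow> g s = s) \<longrightarrow> (\<forall>z\<in>U'. act g z \<in> V))"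
proof -
  let ?G = "Aut sig L" and ?e = "restrict id (univ L)"
  have e: "?e \<in> ?G" using aut_id[OF wf] .
  have x: "x \<in> topspace X" using V xV openin_subset by blast
  have c: "continuous_map (prod_topology (pointwise_top ?G) X) X (\<lambda>(g,x). act g x)"
    using fl unfolding is_flow_def by blast
  have ex: "act ?e x = x" using flow_id[OF fl x] .
  let ?P = "{p \<in> topspace (prod_topology (pointwise_top ?G) X). (\<lambda>(g,x). act g x) p \<in> V}"
  have op: "openin (prod_topology (pointwise_top ?G) X) ?P"
    using openin_continuous_map_preimage[OF c V] .
  have mem: "(?e, x) \<in> ?P" using e x ex xV by simp
  obtain W U' where W: "openin (pointwise_top ?G) W" "openin X U'" "?e \<in> W" "x \<in> U'"
    "W \<times> U' \<subseteq> ?P"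
    using openin_prod_topology_alt[THEN iffD1, rule_format, OF op mem] by blast
  obtain Op where Op: "openin (product_topology (\<lambda>_. discrete_topology (UNIV::nat set)) UNIV) Op"
    "W = Op \<inter> ?G"
    using W(1)[unfolded pointwise_top_def openin_subtopology] by blast
  obtain Xs where Xs: "?e \<in> (\<Pi>\<^sub>E i\<in>UNIV. Xs i)" "finite {i. Xs i \<noteq> topspace (discrete_topology (UNIV::nat set))}"
    "(\<Pi>\<^sub>E i\<in>UNIV. Xs i) \<subseteq> Op"
  proof -
    have "?e \<in> Op" using W(3) Op(2) by blast
    from product_topology_open_contains_basis[OF Op(1) this] show ?thesis using that by blast
  qed
  define S where "S = {i. Xs i \<noteq> UNIV}"
  have fS: "finite S" using Xs(2) unfolding S_def by simp
  show ?thesis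
  proof (intro exI[of _ S] exI[of _ U'] conjI ballI impI)
    show "finite S" by fact
    show "openin X U'" "x \<in> U'" by fact+
    fix g z assume g: "g \<in> ?G" and gs: "\<forall>s\<in>S. s \<in> univ L \<longrightarrow> g s = s" and z: "z \<in> U'"
    have "\<And>i. g i \<in> Xs i"
    proof -
      fix i
      show "g i \<in> Xs i"
      proof (cases "i \<in> S")
        case False then show ?thesis unfolding S_def by auto
      next
        case True
        have "?e i \<in> Xs i" using Xs(1)[unfolded PiE_iff] by blast
        moreover have "g i = ?e i"
          using gs True aut_ext[OF g, of i] by (cases "i \<in> univ L") auto
        ultimately show ?thesis by simp
      qed
    qed
    then have "g \<in> (\<Pi>\<^sub>E i\<in>UNIV. Xs i)" by (simp add: PiE_iff)
    then have "g \<in> W" using Xs(3) Op(2) g by blast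
    then show "act g z \<in> V" using W(5) z by auto
  qed
qed

lemma syndetic:
  assumes mf: "minimal_flow (univ L) (Aut sig L) X act" and wf: "wf_struct sig L"
    and Oo: "openin X Op" and xO: "x \<in> Op"
  shows "\<exists>F. finite F \<and> F \<subseteq> Aut sig L \<and> (\<forall>z\<in>topspace X. \<exists>g\<in>F. act g z \<in> Op)"
proof -
  let ?G = "Aut sig L" and ?e = "restrict id (univ L)"
  have fl: "is_flow (univ L) ?G X act" using mf unfolding minimal_flow_def by blast
  define Q where "Q g = {z \<in> topspace X. act g z \<in> Op}" for g
  have Qo: "\<And>g. g \<in> ?G \<Longrightarrow> openin X (Q g)"
    unfolding Q_def by (rule openin_continuous_map_preimage[OF act_cont[OF fl] Oo])
  let ?Y = "topspace X - (\<Union>g\<in>?G. Q g)"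
  have cl: "closedin X ?Y" using Qo by (intro closedin_diff) auto
  have x: "x \<in> topspace X" using Oo xO openin_subset by blast
  have "x \<in> Q ?e" using flow_id[OF fl x] x xO unfolding Q_def by simp
  then have xnY: "x \<notin> ?Y" using aut_id[OF wf] by blast
  have inv: "\<forall>g\<in>?G. \<forall>y\<in>?Y. act g y \<in> ?Y"
  proof (intro ballI)
    fix g y assume g: "g \<in> ?G" and y: "y \<in> ?Y"
    have gy: "act g y \<in> topspace X" using flow_mem[OF fl g] y by blast
    have "act g y \<notin> Q h" if h: "h \<in> ?G" for h
    proof
      assume "act g y \<in> Q h"
      then have "act (compose (univ L) h g) y \<in> Op"
        using flow_comp[OF fl h g, of y] y unfolding Q_def by simp
      moreover have "compose (univ L) h g \<in> ?G" using aut_comp[OF wf h g] .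
      ultimately show False using y unfolding Q_def by blast
    qed
    then show "act g y \<in> ?Y" using gy by blast
  qed
  have "?Y = {}"
  proof (rule ccontr)
    assume "?Y \<noteq> {}"
    moreover have min: "\<forall>Y. closedin X Y \<and> Y \<noteq> {} \<and> (\<forall>g\<in>?G. \<forall>y\<in>Y. act g y \<in> Y) \<longrightarrow> Y = topspace X"
      using mf unfolding minimal_flow_def by (elim conjE)
    ultimately have "?Y = topspace X" using cl inv by blast
    then show False using xnY x by blast
  qed
  then have cov: "topspace X \<subseteq> \<Union>(Q ` ?G)" by blast
  have "compact_space X" using fl unfolding is_flow_def by blast
  then obtain \<F> where F: "finite \<F>" "\<F> \<subseteq> Q ` ?G" "topspace X \<subseteq> \<Union>\<F>"
  proof -
    have "(\<forall>U\<in>Q ` ?G. openin X U) \<and> topspace X \<subseteq> \<Union>(Q ` ?G)" using cov Qo by blast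
    from \<open>compact_space X\<close>[unfolded compact_space_alt, rule_format, OF this] show ?thesis
      using that by blast
  qed
  then obtain F where "F \<subseteq> ?G" "finite F" "\<F> = Q ` F"
    using finite_subset_image[OF F(1,2)] by blast
  then show ?thesis using F(3) unfolding Q_def by (intro exI[of _ F]) auto
qed

theorem mainTheorem11:
  fixes sig :: "('r,'f) signature"
    and K :: "(nat,'r,'f) struct set"
    and L :: "(nat,'r,'f) struct"
    and d :: nat
    and X :: "'x topology"
    and act :: "(nat \<Rightarrow> nat) \<Rightarrow> 'x \<Rightarrow> 'x"
  assumes "fraisse_class sig K"
    and "is_fraisse_limit sig K L"
    and "\<forall>A\<in>K. \<exists>B\<in>K. ramsey_degree sig K B \<le> enat d \<and> embeds sig A B"
    and "universal_minimal_flow (univ L) (Aut sig L) X act"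
  shows "finite (topspace X) \<and> card (topspace X) \<le> d"
proof (rule ccontr)
  let ?U = "univ L" and ?G = "Aut sig L" and ?e = "restrict id (univ L)"
  assume neg: "\<not> (finite (topspace X) \<and> card (topspace X) \<le> d)"
  note FC = assms(1) and FL = assms(2) and cof = assms(3)
  have wfL: "wf_struct sig L" using fl_wf[OF FL] .
  have mf: "minimal_flow ?U ?G X act" using assms(4) unfolding universal_minimal_flow_def by blast
  have fl: "is_flow ?U ?G X act" using mf unfolding minimal_flow_def by blast
  have H: "Hausdorff_space X" using fl unfolding is_flow_def by blast
  obtain Y where Y: "Y \<subseteq> topspace X" "finite Y" "card Y = Suc d"
  proof (cases "finite (topspace X)")
    case True then have "Suc d \<le> card (topspace X)" using neg by auto
    then obtain Y where "Y \<subseteq> topspace X" "card Y = Suc d" "finite Y" by (rule obtain_subset_with_card_n)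
    then show ?thesis using that by blast
  next
    case False then obtain Y where "Y \<subseteq> topspace X" "finite Y" "card Y = Suc d"
      using infinite_arbitrarily_large[OF False, of "Suc d"] by blast
    then show ?thesis using that by blast
  qed
  obtain x where x: "bij_betw x {0..<Suc d} Y" using ex_bij_betw_nat_finite[OF Y(2)] Y(3) by auto
  have xinj: "inj_on x {..<Suc d}" and xsub: "x ` {..<Suc d} \<subseteq> topspace X"
    using x Y(1) by (auto simp: bij_betw_def atLeast0LessThan)
  obtain V where V: "\<forall>i<Suc d. openin X (V i) \<and> x i \<in> V i \<and> (\<forall>j<Suc d. j \<noteq> i \<longrightarrow> V i \<inter> V j = {})"
    using hausdorff_sep[OF H xinj xsub] by blast
  define Q where "Q i p \<longleftrightarrow> (i < Suc d \<longrightarrow> finite (fst p) \<and> openin X (snd p) \<and> x i \<in> snd p \<and>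
     (\<forall>g\<in>?G. (\<forall>s\<in>fst p. s \<in> ?U \<longrightarrow> g s = s) \<longrightarrow> (\<forall>z\<in>snd p. act g z \<in> V i)))" for i p
  have ex_p: "\<forall>i. \<exists>p. Q i p"
  proof
    fix i
    show "\<exists>p. Q i p"
    proof (cases "i < Suc d")
      case True
      then obtain S U' where "finite S \<and> openin X U' \<and> x i \<in> U' \<and>
        (\<forall>g\<in>?G. (\<forall>s\<in>S. s \<in> ?U \<longrightarrow> g s = s) \<longrightarrow> (\<forall>z\<in>U'. act g z \<in> V i))"
        using cont_nbhd[OF fl wfL, of "V i" "x i"] V by blast
      then show ?thesis unfolding Q_def by (intro exI[of _ "(S, U')"]) simp
    qed (simp add: Q_def)
  qed
  obtain p where p: "\<forall>i. Q i (p i)" using choice[OF ex_p] by blast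
  define S where "S i = fst (p i)" for i
  define U' where "U' i = snd (p i)" for i
  have SU: "\<And>i. i < Suc d \<Longrightarrow> finite (S i) \<and> openin X (U' i) \<and> x i \<in> U' i \<and>
     (\<forall>g\<in>?G. (\<forall>s\<in>S i. s \<in> ?U \<longrightarrow> g s = s) \<longrightarrow> (\<forall>z\<in>U' i. act g z \<in> V i))"
    using p unfolding S_def U'_def Q_def by blast
  have U'V: "\<And>i. i < Suc d \<Longrightarrow> U' i \<subseteq> V i"
  proof
    fix i z assume i: "i < Suc d" and z: "z \<in> U' i"
    have "z \<in> topspace X" using SU[OF i] z openin_subset by blast
    then have "act ?e z = z" using flow_id[OF fl] by blast
    moreover have "act ?e z \<in> V i" using SU[OF i] aut_id[OF wfL] z by auto
    ultimately show "z \<in> V i" by simp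
  qed
  have ex_F: "\<forall>i. \<exists>F. i < Suc d \<longrightarrow> finite F \<and> F \<subseteq> ?G \<and> (\<forall>z\<in>topspace X. \<exists>g\<in>F. act g z \<in> U' i)"
  proof
    fix i
    show "\<exists>F. i < Suc d \<longrightarrow> finite F \<and> F \<subseteq> ?G \<and> (\<forall>z\<in>topspace X. \<exists>g\<in>F. act g z \<in> U' i)"
    proof (cases "i < Suc d")
      case True
      then have "openin X (U' i)" "x i \<in> U' i" using SU by auto
      from syndetic[OF mf wfL this] show ?thesis by blast
    qed simp
  qed
  obtain F where F: "\<forall>i. i < Suc d \<longrightarrow> finite (F i) \<and> F i \<subseteq> ?G \<and> (\<forall>z\<in>topspace X. \<exists>g\<in>F i. act g z \<in> U' i)"
    using choice[OF ex_F] by blast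
  define y where "y = x 0"
  have y: "y \<in> topspace X" using xsub unfolding y_def by auto
  define S0 where "S0 = (\<Union>i<Suc d. S i) \<inter> ?U"
  have S0: "S0 \<subseteq> ?U" "finite S0" using SU unfolding S0_def by auto
  obtain T0 where T0: "S0 \<subseteq> T0" "finite T0" "closed_in_struct sig L T0" using locfin[OF FL S0] by blast
  define A0 where "A0 = substruct L T0"
  have A0K: "A0 \<in> K" unfolding A0_def using substruct_in_K[OF FL T0(3,2)] .
  have wfA0: "wf_struct sig A0" unfolding A0_def using substruct_wf[OF T0(3)] .
  have uA0: "univ A0 = T0" unfolding A0_def substruct_def by simp
  obtain B0 where B0: "B0 \<in> K" "ramsey_degree sig K B0 \<le> enat d" "embeds sig A0 B0"
    using cof A0K by blast
  obtain f where f: "f \<in> emb sig A0 B0" using B0(3) unfolding embeds_def by blast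
  have wfB0: "wf_struct sig B0" "finite (univ B0)" using fc_wf[OF FC B0(1)] by auto
  obtain e0 where e0: "e0 \<in> emb sig B0 L" using age[OF FL wfB0] B0(1) unfolding embeds_def by blast
  have bA0: "restrict (e0 \<circ> f) (univ A0) \<in> emb sig A0 L" using emb_comp[OF f e0 wfA0] .
  have aA0: "restrict id T0 \<in> emb sig A0 L" unfolding A0_def using id_emb_substruct[OF T0(3)] .
  obtain h1 where h1: "h1 \<in> ?G" "\<forall>t\<in>univ A0. h1 (restrict (e0 \<circ> f) (univ A0) t) = restrict id T0 t"
    using homog[OF FL wfA0 _ aA0 bA0] T0(2) uA0 by auto
  define \<alpha> where "\<alpha> = restrict (h1 \<circ> e0) (univ B0)"
  have \<alpha>: "\<alpha> \<in> emb sig B0 L" unfolding \<alpha>_def using emb_comp[OF e0 _ wfB0(1)] aut_memD[OF h1(1)] by blast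
  have \<alpha>U: "\<And>t. t \<in> univ B0 \<Longrightarrow> \<alpha> t \<in> ?U" using emb_memD(1)[OF \<alpha>] by auto
  have T0sub: "\<And>s. s \<in> T0 \<Longrightarrow> \<exists>t\<in>univ B0. \<alpha> t = s"
  proof -
    fix s assume s: "s \<in> T0"
    have "f s \<in> univ B0" using emb_memD(1)[OF f] s uA0 by auto
    moreover have "\<alpha> (f s) = s" using h1(2) s uA0 \<open>f s \<in> univ B0\<close> unfolding \<alpha>_def by auto
    ultimately show "\<exists>t\<in>univ B0. \<alpha> t = s" by blast
  qed
  define Pc where "Pc i \<beta> \<longleftrightarrow> (\<exists>h\<in>?G. (\<forall>t\<in>univ B0. h (\<beta> t) = \<alpha> t) \<and> act h y \<in> U' i)" for i \<beta>
  have uniq: "i = j" if ij: "i < Suc d" "j < Suc d" and bU: "\<forall>t\<in>univ B0. \<beta> t \<in> ?U"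
    and Pi: "Pc i \<beta>" and Pj: "Pc j \<beta>" for i j \<beta>
  proof -
    obtain g1 where g1: "g1 \<in> ?G" "\<forall>t\<in>univ B0. g1 (\<beta> t) = \<alpha> t" "act g1 y \<in> U' i"
      using Pi unfolding Pc_def by blast
    obtain g2 where g2: "g2 \<in> ?G" "\<forall>t\<in>univ B0. g2 (\<beta> t) = \<alpha> t" "act g2 y \<in> U' j"
      using Pj unfolding Pc_def by blast
    let ?gi = "restrict (inv_into ?U g1) ?U"
    have gi: "?gi \<in> ?G" using aut_inv(1)[OF wfL g1(1)] .
    have inj1: "inj_on g1 ?U" using emb_memD(2) aut_memD[OF g1(1)] by blast
    define v where "v = compose ?U g2 ?gi"
    have v: "v \<in> ?G" unfolding v_def using aut_comp[OF wfL g2(1) gi] .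
    have vfix: "\<forall>s\<in>S i. s \<in> ?U \<longrightarrow> v s = s"
    proof (intro ballI impI)
      fix s assume s: "s \<in> S i" "s \<in> ?U"
      then have "s \<in> T0" using T0(1) ij(1) unfolding S0_def by blast
      then obtain t where t: "t \<in> univ B0" "\<alpha> t = s" using T0sub by blast
      have "?gi s = \<beta> t" using g1(2) t s bU inv_into_f_f[OF inj1] by force
      then show "v s = s" unfolding v_def using s t g2(2) by (simp add: compose_def)
    qed
    have g1y: "act g1 y \<in> topspace X" using flow_mem[OF fl g1(1) y] .
    have "act v (act g1 y) \<in> V i" using SU[OF ij(1)] v vfix g1(3) by blast
    moreover have "compose ?U v g1 = g2"
    proof
      fix z show "compose ?U v g1 z = g2 z"
      proof (cases "z \<in> ?U")
        case True
        have "g1 z \<in> ?U" using aut_maps[OF g1(1) True] .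
        then show ?thesis using True inv_into_f_f[OF inj1 True] unfolding v_def by (simp add: compose_def)
      next
        case False then show ?thesis using aut_ext[OF g2(1) False] by (simp add: compose_def)
      qed
    qed
    moreover have "act (compose ?U v g1) y = act v (act g1 y)" using flow_comp[OF fl v g1(1) y] .
    ultimately have "act g2 y \<in> V i" by simp
    moreover have "act g2 y \<in> V j" using g2(3) U'V[OF ij(2)] by blast
    ultimately show "i = j" using V ij by blast
  qed
  define colorf where "colorf \<beta> = (if \<exists>i<Suc d. Pc i \<beta> then (LEAST i. i < Suc d \<and> Pc i \<beta>) else Suc d)" for \<beta>
  have colorf_eq: "colorf \<beta> = i" if i: "i < Suc d" "Pc i \<beta>" and bU: "\<forall>t\<in>univ B0. \<beta> t \<in> ?U" for i \<beta>
  proof -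
    have "(LEAST i. i < Suc d \<and> Pc i \<beta>) = i"
      using i uniq[OF _ _ bU] by (intro Least_equality) auto
    then show ?thesis using i unfolding colorf_def by auto
  qed
  have colorf_lt: "colorf \<beta> < Suc (Suc d)" for \<beta>
  proof (cases "\<exists>i<Suc d. Pc i \<beta>")
    case True
    then have "(LEAST i. i < Suc d \<and> Pc i \<beta>) < Suc d" by (metis (mono_tags, lifting) LeastI)
    then show ?thesis unfolding colorf_def by simp
  next
    case False then show ?thesis unfolding colorf_def by (simp only: if_False)
  qed
  define Fall where "Fall = (\<Union>i<Suc d. F i)"
  have Fall: "finite Fall" "Fall \<subseteq> ?G" using F unfolding Fall_def by auto
  define ginv where "ginv g = restrict (inv_into ?U g) ?U" for g
  define ag where "ag g = restrict (ginv g \<circ> \<alpha>) (univ B0)" for g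
  have ag: "ag g \<in> emb sig B0 L" if g: "g \<in> ?G" for g
    unfolding ag_def using emb_comp[OF \<alpha> _ wfB0(1)] aut_memD[OF aut_inv(1)[OF wfL g]] unfolding ginv_def by blast
  define Qs where "Qs = (\<Union>g\<in>Fall. ag g ` univ B0)"
  have Qs: "Qs \<subseteq> ?U" "finite Qs"
  proof -
    have "\<And>g t. g \<in> Fall \<Longrightarrow> t \<in> univ B0 \<Longrightarrow> ag g t \<in> ?U"
    proof -
      fix g t assume "g \<in> Fall" "t \<in> univ B0"
      then have agm: "ag g \<in> emb sig B0 L" using ag Fall by blast
      show "ag g t \<in> ?U" using emb_memD(1)[OF agm] \<open>t \<in> univ B0\<close> by (auto simp: PiE_iff)
    qed
    then show "Qs \<subseteq> ?U" unfolding Qs_def by blast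
    show "finite Qs" unfolding Qs_def using Fall wfB0(2) by blast
  qed
  obtain TB where TB: "Qs \<subseteq> TB" "finite TB" "closed_in_struct sig L TB" using locfin[OF FL Qs] by blast
  define B where "B = substruct L TB"
  have BK: "B \<in> K" unfolding B_def using substruct_in_K[OF FL TB(3,2)] .
  have wfB: "wf_struct sig B" "finite (univ B)" using fc_wf[OF FC BK] by auto
  have uB: "univ B = TB" unfolding B_def substruct_def by simp
  have TBU: "TB \<subseteq> ?U" using TB(3) unfolding closed_in_struct_def by simp
  have agB: "ag g \<in> emb sig B0 B" if g: "g \<in> Fall" for g
  proof -
    have "ag g ` univ B0 \<subseteq> TB" using g TB(1) unfolding Qs_def by blast
    then show ?thesis unfolding B_def using emb_substruct_iff[OF TBU] ag Fall g by blast
  qed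
  have rp: "ramsey_prop sig K B0 d" using rd_prop[OF B0(2)] .
  obtain C where C: "C \<in> K" "arrows sig C B B0 (Suc (Suc d)) d"
  proof -
    have "(2::nat) \<le> Suc (Suc d)" by simp
    from rp[unfolded ramsey_prop_def, rule_format, OF BK this] show ?thesis using that by blast
  qed
  have wfC: "wf_struct sig C" "finite (univ C)" using fc_wf[OF FC C(1)] by auto
  obtain c where c: "c \<in> emb sig C L" using age[OF FL wfC] C(1) unfolding embeds_def by blast
  define chi where "chi = restrict (\<lambda>a. colorf (\<lambda>t. c (a t))) (emb sig B0 C)"
  have chi: "chi \<in> emb sig B0 C \<rightarrow> {..<Suc (Suc d)}" unfolding chi_def using colorf_lt by auto
  obtain b where b: "b \<in> emb sig B C"
    "card (chi ` {compose (univ B0) b a | a. a \<in> emb sig B0 B}) \<le> d"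
    using C(2) chi unfolding arrows_def by blast
  let ?SS = "{compose (univ B0) b a | a. a \<in> emb sig B0 B}"
  have allc: "{..<Suc d} \<subseteq> chi ` ?SS"
  proof
    fix i assume "i \<in> {..<Suc d}"
    then have i: "i < Suc d" by simp
    have cb: "restrict (c \<circ> b) (univ B) \<in> emb sig B L" using emb_comp[OF b(1) c wfB(1)] .
    have idB: "restrict id TB \<in> emb sig B L" unfolding B_def using id_emb_substruct[OF TB(3)] .
    obtain h0 where h0: "h0 \<in> ?G" "\<forall>t\<in>univ B. h0 (restrict id TB t) = restrict (c \<circ> b) (univ B) t"
      using homog[OF FL wfB cb idB] by blast
    have h0': "\<And>w. w \<in> TB \<Longrightarrow> h0 w = c (b w)" using h0(2) uB by auto
    let ?h0i = "ginv h0"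
    have h0i: "?h0i \<in> ?G" unfolding ginv_def using aut_inv(1)[OF wfL h0(1)] .
    have inj0: "inj_on h0 ?U" using emb_memD(2) aut_memD[OF h0(1)] by blast
    define z where "z = act ?h0i y"
    have z: "z \<in> topspace X" unfolding z_def using flow_mem[OF fl h0i y] .
    obtain g where g: "g \<in> F i" "act g z \<in> U' i" using F i z by blast
    have gF: "g \<in> Fall" unfolding Fall_def using g(1) i by blast
    have gG: "g \<in> ?G" using Fall gF by blast
    define sa where "sa = compose (univ B0) b (ag g)"
    have saSS: "sa \<in> ?SS" unfolding sa_def using agB[OF gF] by blast
    have saC: "sa \<in> emb sig B0 C"
      unfolding sa_def compose_def using emb_comp[OF agB[OF gF] b(1) wfB0(1)] by (simp add: o_def)
    have bU: "\<forall>t\<in>univ B0. c (sa t) \<in> ?U" using emb_memD(1)[OF saC] emb_memD(1)[OF c] by (auto simp: PiE_iff)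
    have "Pc i (\<lambda>t. c (sa t))"
      unfolding Pc_def
    proof (intro bexI[of _ "compose ?U g ?h0i"] conjI ballI)
      show "compose ?U g ?h0i \<in> ?G" using aut_comp[OF wfL gG h0i] .
      show "act (compose ?U g ?h0i) y \<in> U' i"
        using flow_comp[OF fl gG h0i y] g(2) unfolding z_def by simp
      fix t assume t: "t \<in> univ B0"
      have w: "ag g t \<in> TB" using emb_memD(1)[OF agB[OF gF]] t uB by (auto simp: PiE_iff)
      have wU: "ag g t \<in> ?U" using w TBU by blast
      have cs: "c (sa t) = h0 (ag g t)" using h0'[OF w] t unfolding sa_def by (simp add: compose_def)
      have cU: "c (sa t) \<in> ?U" using bU t by blast
      have "?h0i (c (sa t)) = ag g t" using cs cU wU inv_into_f_f[OF inj0 wU] unfolding ginv_def by simp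
      moreover have "ag g t = ginv g (\<alpha> t)" unfolding ag_def using t by simp
      moreover have "g (ginv g (\<alpha> t)) = \<alpha> t"
        using \<alpha>U[OF t] aut_memD[OF gG] unfolding ginv_def by (simp add: f_inv_into_f)
      ultimately show "compose ?U g ?h0i (c (sa t)) = \<alpha> t" using cU by (simp add: compose_def)
    qed
    then have "colorf (\<lambda>t. c (sa t)) = i" using colorf_eq[OF i] bU by blast
    moreover have "chi sa = colorf (\<lambda>t. c (sa t))" unfolding chi_def using saC by simp
    ultimately show "i \<in> chi ` ?SS" using saSS by force
  qed
  have "finite (chi ` ?SS)"
  proof (rule finite_subset)
    show "chi ` ?SS \<subseteq> {..<Suc (Suc d)}"
    proof
      fix q assume "q \<in> chi ` ?SS"
      then obtain s where s: "s \<in> ?SS" "q = chi s" by blast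
      then obtain a where a: "a \<in> emb sig B0 B" "s = compose (univ B0) b a" by blast
      have "s \<in> emb sig B0 C"
        unfolding a(2) compose_def using emb_comp[OF a(1) b(1) wfB0(1)] by (simp add: o_def)
      then have "chi s = colorf (\<lambda>t. c (s t))" unfolding chi_def by simp
      then show "q \<in> {..<Suc (Suc d)}" using colorf_lt s(2) by simp
    qed
  qed simp
  then have "card {..<Suc d} \<le> card (chi ` ?SS)" using allc card_mono by blast
  then show False using b(2) by simp
qed

end
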